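(* Let $S$ be an infinite set, $\mathcal{F}\subseteq 2^S$ nontrivial, and $C,A\subseteq S$ with $A$ infinite and $A\cap C=\emptyset$. Then the following are equivalent: (i) $A\in\mathit{ccore}_1(C,\mathcal{F})$; (ii) $A\notin\mathit{cclass}_1(C,\mathcal{F})$ and $A\in\mathit{ccohesive}(S\setminus C,\mathcal{F})$.
   Context: $\mathcal{F}$ is nontrivial if $\emptyset,S\in\mathcal{F}$ and for all $Q\in\mathcal{F}$ and finite $E\subseteq S$ both $Q\cup E\in\mathcal{F}$ and $Q\setminus E\in\mathcal{F}$. For $C\subseteq S$ and an infinite $A\subseteq S\setminus C$: $A\in\mathit{cclass}_1(C,\mathcal{F})$ iff there is $Q\in\mathcal{F}$ with $S\setminus Q\in\mathcal{F}$, $C\subseteq Q$ and $A\subseteq S\setminus Q$; $A\in\mathit{ccore}_1(C,\mathcal{F})$ iff every infinite $A'\subseteq A$ satisfies $A'\notin\mathit{cclass}_1(C,\mathcal{F})$. For $D\subseteq S$, $A\in\mathit{ccohesive}(D,\mathcal{F})$ iff $A$ is infinite and for every $Q\subseteq D$ with $Q\in\mathcal{F}$ and $S\setminus Q\in\mathcal{F}$, either $A\cap Q$ or $A\setminus Q$ is finite. *)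

theory Defs
  imports Main
begin

definition nontrivial :: "'a set \<Rightarrow> 'a set set \<Rightarrow> bool" where
  "nontrivial S F \<longleftrightarrow> F \<subseteq> Pow S \<and> {} \<in> F \<and> S \<in> F \<and>
     (\<forall>Q\<in>F. \<forall>E. finite E \<and> E \<subseteq> S \<longrightarrow> Q \<union> E \<in> F \<and> Q - E \<in> F)"

definition cclass1 :: "'a set \<Rightarrow> 'a set \<Rightarrow> 'a set set \<Rightarrow> 'a set set" where
  "cclass1 S C F = {A. infinite A \<and> A \<subseteq> S - C \<and>
     (\<exists>Q\<in>F. S - Q \<in> F \<and> C \<subseteq> Q \<and> A \<subseteq> S - Q)}"

definition ccore1 :: "'a set \<Rightarrow> 'a set \<Rightarrow> 'a set set \<Rightarrow> 'a set set" where
  "ccore1 S C F = {A. infinite A \<and> A \<subseteq> S - C \<and>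
     (\<forall>A'. A' \<subseteq> A \<and> infinite A' \<longrightarrow> A' \<notin> cclass1 S C F)}"

definition ccohesive :: "'a set \<Rightarrow> 'a set \<Rightarrow> 'a set set \<Rightarrow> 'a set set" where
  "ccohesive S D F = {A. infinite A \<and>
     (\<forall>Q. Q \<subseteq> D \<and> Q \<in> F \<and> S - Q \<in> F \<longrightarrow> finite (A \<inter> Q) \<or> finite (A - Q))}"

end

theory Submission
  imports Defs
begin

theorem lemma4p3:
  fixes S C A :: "'a set" and F :: "'a set set"
  assumes "infinite S" and "nontrivial S F"
    and "C \<subseteq> S" and "A \<subseteq> S" and "infinite A" and "A \<inter> C = {}"
  shows "A \<in> ccore1 S C F \<longleftrightarrow> (A \<notin> cclass1 S C F \<and> A \<in> ccohesive S (S - C) F)"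
proof
  assume h: "A \<in> ccore1 S C F"
  have nc: "\<And>A'. A' \<subseteq> A \<Longrightarrow> infinite A' \<Longrightarrow> A' \<notin> cclass1 S C F"
    using h unfolding ccore1_def by blast
  have "A \<notin> cclass1 S C F" using nc assms(5) by blast
  moreover have "A \<in> ccohesive S (S - C) F"
    unfolding ccohesive_def
  proof (intro CollectI conjI allI impI assms(5))
    fix Q assume q: "Q \<subseteq> S - C \<and> Q \<in> F \<and> S - Q \<in> F"
    show "finite (A \<inter> Q) \<or> finite (A - Q)"
    proof (rule ccontr)
      assume "\<not> ?thesis"
      hence inf: "infinite (A \<inter> Q)" by blast
      have "S - (S - Q) = Q" using q by blast
      hence "A \<inter> Q \<in> cclass1 S C F" unfolding cclass1_def
        using inf q assms(3,4,6) by (intro CollectI conjI bexI[of _ "S - Q"]) auto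
      thus False using nc inf by blast
    qed
  qed
  ultimately show "A \<notin> cclass1 S C F \<and> A \<in> ccohesive S (S - C) F" by blast
next
  assume h: "A \<notin> cclass1 S C F \<and> A \<in> ccohesive S (S - C) F"
  have coh: "\<And>Q. Q \<subseteq> S - C \<Longrightarrow> Q \<in> F \<Longrightarrow> S - Q \<in> F \<Longrightarrow> finite (A \<inter> Q) \<or> finite (A - Q)"
    using h unfolding ccohesive_def by blast
  have nt: "F \<subseteq> Pow S" "\<And>Q E. Q \<in> F \<Longrightarrow> finite E \<Longrightarrow> E \<subseteq> S \<Longrightarrow> Q \<union> E \<in> F \<and> Q - E \<in> F"
    using assms(2) unfolding nontrivial_def by blast+
  show "A \<in> ccore1 S C F" unfolding ccore1_def
  proof (intro CollectI conjI allI impI assms(5))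
    show "A \<subseteq> S - C" using assms(4,6) by blast
  next
    fix A' assume a': "A' \<subseteq> A \<and> infinite A'"
    show "A' \<notin> cclass1 S C F"
    proof
      assume "A' \<in> cclass1 S C F"
      then obtain Q where Q: "Q \<in> F" "S - Q \<in> F" "C \<subseteq> Q" "A' \<subseteq> S - Q"
        unfolding cclass1_def by blast
      have QS: "Q \<subseteq> S" using Q(1) nt(1) by blast
      have "S - (S - Q) = Q" using QS by blast
      hence c1: "finite (A \<inter> (S - Q)) \<or> finite (A - (S - Q))"
        using coh[of "S - Q"] Q by auto
      have c2: "infinite (A \<inter> (S - Q))"
        using a' Q(4) by (meson Int_greatest finite_subset)
      have fin: "finite (A \<inter> Q)"
        proof -
          have "A - (S - Q) = A \<inter> Q" using assms(4) by blast
          thus ?thesis using c1 c2 by auto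
        qed
      let ?Q = "Q - (A \<inter> Q)"
      have q1: "?Q \<in> F" using nt(2)[OF Q(1) fin] QS by blast
      have "S - ?Q = (S - Q) \<union> (A \<inter> Q)" using QS by blast
      hence q2: "S - ?Q \<in> F" using nt(2)[OF Q(2) fin] QS by auto
      have "A \<in> cclass1 S C F" unfolding cclass1_def
        using q1 q2 Q(3) assms(4,5,6) by (intro CollectI conjI bexI[of _ ?Q]) auto
      thus False using h by blast
    qed
  qed
qed

end
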